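(* Let $F:\mathcal{P}(V,A)\to S_2(A)$ be an irreducible, weakly viable consular election rule satisfying SPP and SPO. Then every vertex of the range graph $\mathcal{G}(F)$ belongs to a $3$-cycle.
   Context: $V$ is a finite nonempty set of voters, $A$ a finite set of alternatives; a profile $P$ assigns to each voter $i$ a linear order $P_i$ on $A$; $P_i'P_{-i}$ replaces voter $i$'s order by $P_i'$; $P|_B$ is the profile of restrictions to $B\subseteq A$. $S_2(A)$ is the set of 2-element subsets of $A$; a consular election rule is a map $F:\mathcal{P}(V,A)\to S_2(A)$. SPO: for all $P$, $i$, $P_i'$, $\mathrm{best}(P_i,F(P))\succeq_i\mathrm{best}(P_i,F(P_i'P_{-i}))$; SPP: same with $\mathrm{worst}$, where $\mathrm{best}(P_i,W)$, $\mathrm{worst}(P_i,W)$ are the $P_i$-best and $P_i$-worst elements of $W$. Weakly viable: every $a\in A$ lies in $F(P)$ for some $P$. $F$ is reducible if there is a partition $A=B\uplus C$ and social choice functions $G:\mathcal{P}(V,B)\to B$, $H:\mathcal{P}(V,C)\to C$ with $F(P)=\{G(P|_B),H(P|_C)\}$ for all $P$; irreducible means not reducible. The range graph $\mathcal{G}(F)$ has vertex set $A$ and edge set equal to the range of $F$. *)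

theory Defs
  imports Main
begin

(* A preference (linear order) on A is a relation R with linear_order_on A R;
   (x, y) \<in> R means "x is weakly preferred to y". *)

definition profiles :: "'v set \<Rightarrow> 'a set \<Rightarrow> ('v \<Rightarrow> 'a rel) set" where
  "profiles V A = {P. (\<forall>i\<in>V. linear_order_on A (P i)) \<and> (\<forall>i. i \<notin> V \<longrightarrow> P i = {})}"

definition restrict_profile :: "('v \<Rightarrow> 'a rel) \<Rightarrow> 'a set \<Rightarrow> ('v \<Rightarrow> 'a rel)" where
  "restrict_profile P B = (\<lambda>i. P i \<inter> (B \<times> B))"

definition S2 :: "'a set \<Rightarrow> 'a set set" where
  "S2 A = {W. W \<subseteq> A \<and> card W = 2}"

definition consular_rule :: "'v set \<Rightarrow> 'a set \<Rightarrow> (('v \<Rightarrow> 'a rel) \<Rightarrow> 'a set) \<Rightarrow> bool" where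
  "consular_rule V A F \<longleftrightarrow> (\<forall>P\<in>profiles V A. F P \<in> S2 A)"

definition best :: "'a rel \<Rightarrow> 'a set \<Rightarrow> 'a" where
  "best R W = (THE x. x \<in> W \<and> (\<forall>y\<in>W. (x, y) \<in> R))"

definition worst :: "'a rel \<Rightarrow> 'a set \<Rightarrow> 'a" where
  "worst R W = (THE x. x \<in> W \<and> (\<forall>y\<in>W. (y, x) \<in> R))"

definition SPO :: "'v set \<Rightarrow> 'a set \<Rightarrow> (('v \<Rightarrow> 'a rel) \<Rightarrow> 'a set) \<Rightarrow> bool" where
  "SPO V A F \<longleftrightarrow> (\<forall>P\<in>profiles V A. \<forall>i\<in>V. \<forall>R. linear_order_on A R \<longrightarrow>
      (best (P i) (F P), best (P i) (F (P(i := R)))) \<in> P i)"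

definition SPP :: "'v set \<Rightarrow> 'a set \<Rightarrow> (('v \<Rightarrow> 'a rel) \<Rightarrow> 'a set) \<Rightarrow> bool" where
  "SPP V A F \<longleftrightarrow> (\<forall>P\<in>profiles V A. \<forall>i\<in>V. \<forall>R. linear_order_on A R \<longrightarrow>
      (worst (P i) (F P), worst (P i) (F (P(i := R)))) \<in> P i)"

definition weakly_viable :: "'v set \<Rightarrow> 'a set \<Rightarrow> (('v \<Rightarrow> 'a rel) \<Rightarrow> 'a set) \<Rightarrow> bool" where
  "weakly_viable V A F \<longleftrightarrow> (\<forall>a\<in>A. \<exists>P\<in>profiles V A. a \<in> F P)"

definition reducible :: "'v set \<Rightarrow> 'a set \<Rightarrow> (('v \<Rightarrow> 'a rel) \<Rightarrow> 'a set) \<Rightarrow> bool" where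
  "reducible V A F \<longleftrightarrow> (\<exists>B C G H. B \<union> C = A \<and> B \<inter> C = {} \<and>
      (\<forall>P\<in>profiles V B. G P \<in> B) \<and> (\<forall>P\<in>profiles V C. H P \<in> C) \<and>
      (\<forall>P\<in>profiles V A. F P = {G (restrict_profile P B), H (restrict_profile P C)}))"

definition irreducible :: "'v set \<Rightarrow> 'a set \<Rightarrow> (('v \<Rightarrow> 'a rel) \<Rightarrow> 'a set) \<Rightarrow> bool" where
  "irreducible V A F \<longleftrightarrow> \<not> reducible V A F"

(* edge set of the range graph G(F): the range of F on P(V,A); vertex set is A *)
definition range_edges :: "'v set \<Rightarrow> 'a set \<Rightarrow> (('v \<Rightarrow> 'a rel) \<Rightarrow> 'a set) \<Rightarrow> 'a set set" where
  "range_edges V A F = F ` profiles V A"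

end

theory Submission
  imports Defs
begin


lemma linD:
  assumes "linear_order_on A R"
  shows "R \<subseteq> A \<times> A" "\<And>x. x\<in>A \<Longrightarrow> (x,x)\<in>R"
    "\<And>x y z. (x,y)\<in>R \<Longrightarrow> (y,z)\<in>R \<Longrightarrow> (x,z)\<in>R"
    "\<And>x y. (x,y)\<in>R \<Longrightarrow> (y,x)\<in>R \<Longrightarrow> x=y"
    "\<And>x y. x\<in>A \<Longrightarrow> y\<in>A \<Longrightarrow> (x,y)\<in>R \<or> (y,x)\<in>R"
proof -
  have a: "R \<subseteq> A \<times> A" "refl_on A R" "trans R" "antisym R" "total_on A R"
    using assms unfolding linear_order_on_def partial_order_on_def preorder_on_def by auto
  show "R \<subseteq> A \<times> A" by (fact a(1))
  show "\<And>x. x\<in>A \<Longrightarrow> (x,x)\<in>R" using a(2) unfolding refl_on_def by auto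
  show "\<And>x y z. (x,y)\<in>R \<Longrightarrow> (y,z)\<in>R \<Longrightarrow> (x,z)\<in>R" using a(3) by (rule transD)
  show "\<And>x y. (x,y)\<in>R \<Longrightarrow> (y,x)\<in>R \<Longrightarrow> x=y" using a(4) by (rule antisymD)
  show "\<And>x y. x\<in>A \<Longrightarrow> y\<in>A \<Longrightarrow> (x,y)\<in>R \<or> (y,x)\<in>R"
    using a(2,5) unfolding refl_on_def total_on_def by metis
qed

lemma pair_bw:
  assumes lin: "linear_order_on A R" and xy: "(x,y)\<in>R"
  shows "best R {x,y} = x \<and> worst R {x,y} = y"
proof -
  have xA: "x\<in>A" "y\<in>A" using linD(1)[OF lin] xy by auto
  have "best R {x,y} = x" unfolding best_def
  proof (rule the_equality)
    show "x \<in> {x,y} \<and> (\<forall>z\<in>{x,y}. (x,z)\<in>R)" using xy linD(2)[OF lin] xA by auto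
  next
    fix z assume "z \<in> {x,y} \<and> (\<forall>w\<in>{x,y}. (z,w)\<in>R)"
    then show "z = x" using linD(4)[OF lin] xy by auto
  qed
  moreover have "worst R {x,y} = y" unfolding worst_def
  proof (rule the_equality)
    show "y \<in> {x,y} \<and> (\<forall>z\<in>{x,y}. (z,y)\<in>R)" using xy linD(2)[OF lin] xA by auto
  next
    fix z assume "z \<in> {x,y} \<and> (\<forall>w\<in>{x,y}. (w,z)\<in>R)"
    then show "z = y" using linD(4)[OF lin] xy by auto
  qed
  ultimately show ?thesis by simp
qed

lemma S2_ord:
  assumes lin: "linear_order_on A R" and W: "W \<in> S2 A"
  shows "\<exists>p q. W = {p,q} \<and> p \<noteq> q \<and> p\<in>A \<and> q\<in>A \<and> (p,q)\<in>R"
proof -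
  obtain x y where W: "W = {x,y}" "x \<noteq> y" using W unfolding S2_def by (auto simp: card_2_iff)
  have A: "x\<in>A" "y\<in>A" using assms W unfolding S2_def by auto
  show ?thesis
  proof (cases "(x,y)\<in>R")
    case True then show ?thesis using W A by blast
  next
    case False then have "(y,x)\<in>R" using linD(5)[OF lin A] by auto
    then show ?thesis using W A by (metis insert_commute)
  qed
qed

lemma S2_elems: "{u,v} \<in> S2 A \<Longrightarrow> u \<in> A \<and> v \<in> A \<and> u \<noteq> v"
  unfolding S2_def by (cases "u = v") auto

lemma bw_in:
  assumes lin: "linear_order_on A R" and W: "W \<in> S2 A"
  shows "best R W \<in> A \<and> worst R W \<in> A"
  using S2_ord[OF lin W] pair_bw[OF lin] by auto

definition rk :: "('a \<Rightarrow> nat) \<Rightarrow> 'a set \<Rightarrow> 'a rel" where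
  "rk f A = {(x,y). x\<in>A \<and> y\<in>A \<and> f y \<le> f x}"

lemma rk_lin: "inj_on f A \<Longrightarrow> linear_order_on A (rk f A)"
  unfolding rk_def linear_order_on_def partial_order_on_def preorder_on_def refl_on_def
    trans_def antisym_def total_on_def inj_on_def
  by (auto intro: le_antisym)

lemma top3:
  assumes fin: "finite A" and A: "w\<in>A" "u\<in>A" "v\<in>A" and d: "w\<noteq>u" "w\<noteq>v" "u\<noteq>v"
  shows "\<exists>R. linear_order_on A R \<and> (\<forall>x\<in>A. (w,x)\<in>R) \<and> (u,v)\<in>R \<and>
           (\<forall>t. (t,v)\<in>R \<longrightarrow> t=w \<or> t=u \<or> t=v)"
proof -
  obtain h n where h: "h ` A = {i::nat. i < n}" "inj_on h A"
    using finite_imp_inj_to_nat_seg[OF fin] by blast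
  have hlt: "\<And>x. x\<in>A \<Longrightarrow> h x < n" using h(1) by auto
  define f where "f x = (if x=w then n+3 else if x=u then n+2 else if x=v then n+1 else h x)" for x
  have inj: "inj_on f A"
  proof (rule inj_onI)
    fix x y assume "x\<in>A" "y\<in>A" "f x = f y"
    then show "x = y" using hlt[of x] hlt[of y] d h(2) unfolding f_def inj_on_def
      by (auto split: if_splits)
  qed
  show ?thesis
  proof (intro exI conjI allI impI ballI)
    show "linear_order_on A (rk f A)" using rk_lin[OF inj] .
    show "(w,x) \<in> rk f A" if "x\<in>A" for x using that A hlt[of x] unfolding rk_def f_def by auto
    show "(u,v) \<in> rk f A" using A d unfolding rk_def f_def by auto
    fix t assume "(t,v) \<in> rk f A"
    then show "t=w \<or> t=u \<or> t=v" using hlt[of t] d unfolding rk_def f_def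
      by (auto split: if_splits)
  qed
qed




definition good :: "'a set \<Rightarrow> 'a set set \<Rightarrow> bool" where
  "good A Os \<longleftrightarrow> (\<forall>R. linear_order_on A R \<longrightarrow>
     (\<exists>W0\<in>Os. \<forall>W\<in>Os. (best R W0, best R W)\<in>R \<and> (worst R W0, worst R W)\<in>R))"

lemma no_pattern:
  assumes fin: "finite A" and OS: "Os \<subseteq> S2 A" and gd: "good A Os"
    and uv: "{u,v}\<in>Os" and wz: "{w,z}\<in>Os" and d: "w\<noteq>u" "w\<noteq>v"
    and nwu: "{w,u}\<notin>Os" and nwv: "{w,v}\<notin>Os"
  shows False
proof -
  have e1: "u\<in>A" "v\<in>A" "u\<noteq>v" using S2_elems[of u v A] OS uv by auto
  have e2: "w\<in>A" "z\<in>A" "w\<noteq>z" using S2_elems[of w z A] OS wz by auto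
  obtain R where lin: "linear_order_on A R" and top: "\<forall>x\<in>A. (w,x)\<in>R" and uvR: "(u,v)\<in>R"
    and low: "\<forall>t. (t,v)\<in>R \<longrightarrow> t=w \<or> t=u \<or> t=v"
    using top3[OF fin e2(1) e1(1) e1(2) d e1(3)] by blast
  obtain W0 where W0: "W0\<in>Os" and mx: "\<forall>W\<in>Os. (best R W0, best R W)\<in>R \<and> (worst R W0, worst R W)\<in>R"
    using gd lin unfolding good_def by blast
  have W0S: "W0 \<in> S2 A" using OS W0 by blast
  obtain p q where pq: "W0 = {p,q}" "p\<noteq>q" "p\<in>A" "q\<in>A" "(p,q)\<in>R"
    using S2_ord[OF lin W0S] by blast
  have bw0: "best R W0 = p" "worst R W0 = q" using pair_bw[OF lin pq(5)] pq(1) by auto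
  have wzR: "(w,z)\<in>R" using top e2(2) by blast
  have bwz: "best R {w,z} = w" using pair_bw[OF lin wzR] by blast
  have m1: "(best R W0, best R {w,z})\<in>R" using mx wz by blast
  have pwR: "(p,w)\<in>R" using m1 unfolding bwz bw0 .
  have wpR: "(w,p)\<in>R" using top pq(3) by blast
  have pw: "p = w" using linD(4)[OF lin pwR wpR] .
  have wuv: "worst R {u,v} = v" using pair_bw[OF lin uvR] by blast
  have m2: "(worst R W0, worst R {u,v})\<in>R" using mx uv by blast
  have qvR: "(q,v)\<in>R" using m2 unfolding wuv bw0 .
  have "q=w \<or> q=u \<or> q=v" using low qvR by blast
  then have "q = u \<or> q = v" using pq(2) pw by blast
  then show False using pq(1) pw W0 nwu nwv by blast
qed

lemma cross_elem:
  assumes cross: "\<forall>W\<in>Os. \<exists>x\<in>X. \<exists>y\<in>Y. W = {x,y}" and disj: "X \<inter> Y = {}"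
    and W: "W\<in>Os" and x: "x\<in>W" "x\<in>X"
  shows "\<exists>y. y\<in>Y \<and> W = {x,y}"
proof -
  obtain a b where ab: "a\<in>X" "b\<in>Y" "W = {a,b}" using cross W by blast
  have "x = a \<or> x = b" using x(1) ab(3) by blast
  moreover have "x \<noteq> b" using x(2) ab(2) disj by blast
  ultimately have "x = a" by blast
  then show ?thesis using ab by blast
qed

lemma xpart:
  assumes fin: "finite A" and OS: "Os \<subseteq> S2 A" and gd: "good A Os"
    and cross: "\<forall>W\<in>Os. \<exists>x\<in>X. \<exists>y\<in>Y. W = {x,y}" and disj: "X \<inter> Y = {}"
    and lin: "linear_order_on A R" and W0: "W0\<in>Os"
    and mx: "\<forall>W\<in>Os. (best R W0, best R W)\<in>R \<and> (worst R W0, worst R W)\<in>R"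
    and x0: "x0\<in>W0" "x0\<in>X" and W: "W\<in>Os" and x: "x\<in>W" "x\<in>X"
  shows "(x0,x)\<in>R"
proof (rule ccontr)
  assume nx: "(x0,x)\<notin>R"
  obtain y0 where y0: "y0\<in>Y" "W0 = {x0,y0}" using cross_elem[OF cross disj W0 x0] by blast
  obtain y where y: "y\<in>Y" "W = {x,y}" using cross_elem[OF cross disj W x] by blast
  have S0: "{x0,y0} \<in> S2 A" using OS W0 y0 by blast
  have S1: "{x,y} \<in> S2 A" using OS W y by blast
  have A0: "x0\<in>A" "y0\<in>A" "x0\<noteq>y0" using S2_elems[OF S0] by auto
  have A1: "x\<in>A" "y\<in>A" "x\<noteq>y" using S2_elems[OF S1] by auto
  have bW: "(best R W, x)\<in>R"
  proof (cases "(x,y)\<in>R")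
    case True
    have "best R W = x" using pair_bw[OF lin True] y(2) by blast
    then show ?thesis using linD(2)[OF lin A1(1)] by simp
  next
    case False then have yx: "(y,x)\<in>R" using linD(5)[OF lin A1(1,2)] by blast
    have "best R {y,x} = y" using pair_bw[OF lin yx] by blast
    then have "best R W = y" using y(2) by (simp add: insert_commute)
    then show ?thesis using yx by simp
  qed
  have mW: "(best R W0, best R W)\<in>R" "(worst R W0, worst R W)\<in>R" using mx W by blast+
  have y0x0: "(y0,x0)\<in>R"
  proof (rule ccontr)
    assume "(y0,x0)\<notin>R"
    then have x0y0: "(x0,y0)\<in>R" using linD(5)[OF lin A0(1,2)] by blast
    then have "best R W0 = x0" using pair_bw[OF lin x0y0] y0(2) by blast
    then have "(x0, best R W)\<in>R" using mW(1) by simp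
    then show False using bW nx linD(3)[OF lin] by blast
  qed
  have pb: "best R {y0,x0} = y0 \<and> worst R {y0,x0} = x0" using pair_bw[OF lin y0x0] .
  have bw0: "best R W0 = y0" "worst R W0 = x0" using pb y0(2) by (auto simp: insert_commute)
  have y0x: "(y0,x)\<in>R" using mW(1) bW linD(3)[OF lin] unfolding bw0 by blast
  have inO: "{y0,x}\<in>Os"
  proof (cases "y = y0")
    case True then show ?thesis using W y by (simp add: insert_commute)
  next
    case False
    have ny: "{y0,y}\<notin>Os"
    proof
      assume "{y0,y}\<in>Os"
      then obtain a b where ab: "a\<in>X" "b\<in>Y" "{y0,y} = {a,b}" using cross by blast
      then have "a = y0 \<or> a = y" by blast
      then show False using ab(1) y0(1) y(1) disj by blast
    qed
    have y0nx: "y0 \<noteq> x" using y0(1) x(2) disj by blast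
    have W0': "{y0,x0}\<in>Os" using W0 y0(2) by (simp add: insert_commute)
    have Wxy: "{x,y}\<in>Os" using W y(2) by simp
    show ?thesis
    proof (rule ccontr)
      assume n1: "{y0,x}\<notin>Os"
      show False using no_pattern[OF fin OS gd Wxy W0' y0nx False[symmetric] n1 ny] .
    qed
  qed
  have "worst R {y0,x} = x" using pair_bw[OF lin y0x] by blast
  moreover have "(worst R W0, worst R {y0,x})\<in>R" using mx inO by blast
  ultimately have "(x0, x)\<in>R" using bw0 by simp
  then show False using nx by blast
qed




lemma prof_lin: "Q \<in> profiles V A \<Longrightarrow> i\<in>V \<Longrightarrow> linear_order_on A (Q i)"
  unfolding profiles_def by blast

lemma prof_out: "Q \<in> profiles V A \<Longrightarrow> i\<notin>V \<Longrightarrow> Q i = {}"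
  unfolding profiles_def by blast

lemma prof_upd: "Q \<in> profiles V A \<Longrightarrow> i\<in>V \<Longrightarrow> linear_order_on A R \<Longrightarrow> Q(i:=R) \<in> profiles V A"
  unfolding profiles_def by auto

lemma cons_S2: "consular_rule V A F \<Longrightarrow> P \<in> profiles V A \<Longrightarrow> F P \<in> S2 A"
  unfolding consular_rule_def by blast

lemma spoD: "SPO V A F \<Longrightarrow> P \<in> profiles V A \<Longrightarrow> i\<in>V \<Longrightarrow> linear_order_on A R \<Longrightarrow>
    (best (P i) (F P), best (P i) (F (P(i := R)))) \<in> P i"
  unfolding SPO_def by blast

lemma sppD: "SPP V A F \<Longrightarrow> P \<in> profiles V A \<Longrightarrow> i\<in>V \<Longrightarrow> linear_order_on A R \<Longrightarrow>
    (worst (P i) (F P), worst (P i) (F (P(i := R)))) \<in> P i"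
  unfolding SPP_def by blast

lemma unanimity:
  assumes finV: "finite V" and cons: "consular_rule V A F" and spo: "SPO V A F" and spp: "SPP V A F"
    and lin: "linear_order_on A R" and Q: "Q \<in> profiles V A"
  shows "(best R (F (\<lambda>i. if i\<in>V then R else {})), best R (F Q)) \<in> R \<and>
         (worst R (F (\<lambda>i. if i\<in>V then R else {})), worst R (F Q)) \<in> R"
proof -
  have gen: "(best R (F (\<lambda>j. if j\<in>S then R else Q j)), best R (F Q)) \<in> R \<and>
         (worst R (F (\<lambda>j. if j\<in>S then R else Q j)), worst R (F Q)) \<in> R" if SV: "S \<subseteq> V" for S
  proof -
    have fS: "finite S" using finV SV by (rule finite_subset[rotated])
    show ?thesis using fS SV
    proof (induction S rule: finite_subset_induct')
      case empty
      have "F Q \<in> S2 A" using cons_S2[OF cons Q] .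
      then have "best R (F Q) \<in> A \<and> worst R (F Q) \<in> A" using bw_in[OF lin] by blast
      then show ?case using linD(2)[OF lin] by simp
    next
      case (insert i S)
      have iV: "i\<in>V" and iS: "i\<notin>S" and SV': "S \<subseteq> V" using insert by auto
      define P where "P = (\<lambda>j. if j\<in>insert i S then R else Q j)"
      have Pp: "P \<in> profiles V A"
        unfolding profiles_def P_def
      proof (intro CollectI conjI allI ballI impI)
        fix j assume "j\<in>V" then show "linear_order_on A (if j\<in>insert i S then R else Q j)"
          using lin prof_lin[OF Q] by simp
      next
        fix j assume "j\<notin>V" then show "(if j\<in>insert i S then R else Q j) = {}"
          using iV SV' prof_out[OF Q] by auto
      qed
      have Pi: "P i = R" unfolding P_def by simp
      have Pupd: "P(i := Q i) = (\<lambda>j. if j\<in>S then R else Q j)"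
        unfolding P_def using iS by (auto simp: fun_eq_iff)
      have linQ: "linear_order_on A (Q i)" using prof_lin[OF Q iV] .
      have s1: "(best R (F P), best R (F (\<lambda>j. if j\<in>S then R else Q j))) \<in> R"
        using spoD[OF spo Pp iV linQ] unfolding Pi Pupd .
      have s2: "(worst R (F P), worst R (F (\<lambda>j. if j\<in>S then R else Q j))) \<in> R"
        using sppD[OF spp Pp iV linQ] unfolding Pi Pupd .
      show ?case using s1 s2 insert.IH linD(3)[OF lin] unfolding P_def by blast
    qed
  qed
  have eq: "(\<lambda>j. if j\<in>V then R else Q j) = (\<lambda>i. if i\<in>V then R else {})"
    using prof_out[OF Q] by (auto simp: fun_eq_iff)
  show ?thesis using gen[OF order_refl] unfolding eq .
qed

lemma the_elem_cross: "x\<in>X \<Longrightarrow> y\<in>Y \<Longrightarrow> X \<inter> Y = {} \<Longrightarrow> the_elem ({x,y} \<inter> X) = x"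
proof -
  assume a: "x\<in>X" "y\<in>Y" "X \<inter> Y = {}"
  then have "{x,y} \<inter> X = {x}" by blast
  then show ?thesis by simp
qed

lemma indep_step:
  assumes finA: "finite A" and cons: "consular_rule V A F" and spo: "SPO V A F" and spp: "SPP V A F"
    and disj: "X \<inter> Y = {}" and cross: "\<forall>W\<in>F ` profiles V A. \<exists>x\<in>X. \<exists>y\<in>Y. W = {x,y}"
    and Q: "Q \<in> profiles V A" and iV: "i\<in>V" and lin': "linear_order_on A R'"
    and agree: "R' \<inter> X \<times> X = Q i \<inter> X \<times> X"
  shows "the_elem (F (Q(i:=R')) \<inter> X) = the_elem (F Q \<inter> X)"
proof -
  define Os where "Os = (\<lambda>R. F (Q(i:=R))) ` {R. linear_order_on A R}"
  have sub: "Os \<subseteq> F ` profiles V A" unfolding Os_def using prof_upd[OF Q iV] by blast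
  have OS: "Os \<subseteq> S2 A" using sub cons_S2[OF cons] by blast
  have crossO: "\<forall>W\<in>Os. \<exists>x\<in>X. \<exists>y\<in>Y. W = {x,y}" using sub cross by blast
  have mx: "\<forall>W\<in>Os. (best R (F (Q(i:=R))), best R W)\<in>R \<and> (worst R (F (Q(i:=R))), worst R W)\<in>R"
    if lin: "linear_order_on A R" for R
  proof
    fix W assume "W\<in>Os"
    then obtain R2 where R2: "linear_order_on A R2" "W = F (Q(i:=R2))" unfolding Os_def by blast
    have Pp: "Q(i:=R) \<in> profiles V A" using prof_upd[OF Q iV lin] .
    have e: "(Q(i:=R))(i:=R2) = Q(i:=R2)" by simp
    show "(best R (F (Q(i:=R))), best R W)\<in>R \<and> (worst R (F (Q(i:=R))), worst R W)\<in>R"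
      using spoD[OF spo Pp iV R2(1)] sppD[OF spp Pp iV R2(1)] unfolding e R2(2) by simp
  qed
  have gd: "good A Os" unfolding good_def
  proof (intro allI impI)
    fix R assume lin: "linear_order_on A R"
    have "F (Q(i:=R)) \<in> Os" unfolding Os_def using lin by blast
    then show "\<exists>W0\<in>Os. \<forall>W\<in>Os. (best R W0, best R W)\<in>R \<and> (worst R W0, worst R W)\<in>R"
      using mx[OF lin] by blast
  qed
  have lin1: "linear_order_on A (Q i)" using prof_lin[OF Q iV] .
  have QQ: "Q(i := Q i) = Q" by simp
  have W1: "F Q \<in> Os" unfolding Os_def using lin1 QQ by (metis (mono_tags, lifting) image_eqI mem_Collect_eq)
  have W2: "F (Q(i:=R')) \<in> Os" unfolding Os_def using lin' by blast
  have mx1: "\<forall>W\<in>Os. (best (Q i) (F Q), best (Q i) W)\<in>Q i \<and> (worst (Q i) (F Q), worst (Q i) W)\<in>Q i"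
    using mx[OF lin1] unfolding QQ .
  obtain x1 y1 where xy1: "x1\<in>X" "y1\<in>Y" "F Q = {x1,y1}" using crossO W1 by blast
  obtain x2 y2 where xy2: "x2\<in>X" "y2\<in>Y" "F (Q(i:=R')) = {x2,y2}" using crossO W2 by blast
  have in1: "x1 \<in> F Q" using xy1 by blast
  have in2: "x2 \<in> F (Q(i:=R'))" using xy2 by blast
  have r1: "(x1,x2) \<in> Q i"
    using xpart[OF finA OS gd crossO disj lin1 W1 mx1 in1 xy1(1) W2 in2 xy2(1)] .
  have r2: "(x2,x1) \<in> R'"
    using xpart[OF finA OS gd crossO disj lin' W2 mx[OF lin'] in2 xy2(1) W1 in1 xy1(1)] .
  have "(x2,x1) \<in> Q i" using r2 agree xy1(1) xy2(1) by blast
  then have "x1 = x2" using linD(4)[OF lin1 r1] by blast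
  then show ?thesis using xy1 xy2 the_elem_cross[OF _ _ disj] by metis
qed




lemma indep:
  assumes finV: "finite V" and finA: "finite A" and cons: "consular_rule V A F"
    and spo: "SPO V A F" and spp: "SPP V A F"
    and disj: "X \<inter> Y = {}" and cross: "\<forall>W\<in>F ` profiles V A. \<exists>x\<in>X. \<exists>y\<in>Y. W = {x,y}"
    and P: "P \<in> profiles V A" and P': "P' \<in> profiles V A"
    and agr: "\<forall>i. P i \<inter> X \<times> X = P' i \<inter> X \<times> X"
  shows "the_elem (F P \<inter> X) = the_elem (F P' \<inter> X)"
proof -
  have gen: "the_elem (F (\<lambda>j. if j\<in>S then P' j else P j) \<inter> X) = the_elem (F P \<inter> X)"
    if SV: "S \<subseteq> V" for S
  proof -
    have fS: "finite S" using finV SV by (rule finite_subset[rotated])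
    show ?thesis using fS SV
    proof (induction S rule: finite_subset_induct')
      case empty
      show ?case by simp
    next
      case (insert i S)
      have iV: "i\<in>V" and iS: "i\<notin>S" and SV': "S \<subseteq> V" using insert by auto
      define Q where "Q = (\<lambda>j. if j\<in>S then P' j else P j)"
      have Qp: "Q \<in> profiles V A"
        unfolding profiles_def Q_def
      proof (intro CollectI conjI allI ballI impI)
        fix j assume "j\<in>V" then show "linear_order_on A (if j\<in>S then P' j else P j)"
          using prof_lin[OF P] prof_lin[OF P'] by simp
      next
        fix j assume "j\<notin>V" then show "(if j\<in>S then P' j else P j) = {}"
          using SV' prof_out[OF P] by auto
      qed
      have Qi: "Q i = P i" unfolding Q_def using iS by simp
      have Qupd: "Q(i := P' i) = (\<lambda>j. if j\<in>insert i S then P' j else P j)"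
        unfolding Q_def by (auto simp: fun_eq_iff)
      have ag: "P' i \<inter> X \<times> X = Q i \<inter> X \<times> X" using agr Qi by simp
      have "the_elem (F (Q(i := P' i)) \<inter> X) = the_elem (F Q \<inter> X)"
        using indep_step[OF finA cons spo spp disj cross Qp iV prof_lin[OF P' iV] ag] .
      then have h: "the_elem (F (\<lambda>j. if j\<in>insert i S then P' j else P j) \<inter> X) = the_elem (F Q \<inter> X)"
        unfolding Qupd .
      have h2: "the_elem (F (\<lambda>j. if j\<in>insert i S then P' j else P j) \<inter> X)
          = the_elem (F (\<lambda>j. if j\<in>S then P' j else P j) \<inter> X)" using h unfolding Q_def .
      show ?case using h2 insert.IH by (rule trans)
    qed
  qed
  have eq: "(\<lambda>j. if j\<in>V then P' j else P j) = P'"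
    using prof_out[OF P] prof_out[OF P'] by (auto simp: fun_eq_iff)
  show ?thesis using gen[OF order_refl] unfolding eq by simp
qed

lemma side:
  assumes finV: "finite V" and finA: "finite A" and cons: "consular_rule V A F"
    and spo: "SPO V A F" and spp: "SPP V A F"
    and disj: "X \<inter> Y = {}" and cross: "\<forall>W\<in>F ` profiles V A. \<exists>x\<in>X. \<exists>y\<in>Y. W = {x,y}"
    and Xne: "X \<noteq> {}"
  shows "\<exists>G. (\<forall>Q\<in>profiles V X. G Q \<in> X) \<and>
             (\<forall>P\<in>profiles V A. G (restrict_profile P X) = the_elem (F P \<inter> X))"
proof -
  define G where "G Q = (if \<exists>P\<in>profiles V A. restrict_profile P X = Q
      then the_elem (F (SOME P. P\<in>profiles V A \<and> restrict_profile P X = Q) \<inter> X)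
      else (SOME x. x\<in>X))" for Q
  have inX: "the_elem (F P \<inter> X) \<in> X" if P: "P\<in>profiles V A" for P
  proof -
    obtain x y where "x\<in>X" "y\<in>Y" "F P = {x,y}" using cross P by blast
    then show ?thesis using the_elem_cross[OF _ _ disj] by metis
  qed
  show ?thesis
  proof (intro exI conjI ballI)
    fix Q
    show "G Q \<in> X"
    proof (cases "\<exists>P\<in>profiles V A. restrict_profile P X = Q")
      case True
      then have ex: "\<exists>P. P\<in>profiles V A \<and> restrict_profile P X = Q" by blast
      have "(SOME P. P\<in>profiles V A \<and> restrict_profile P X = Q) \<in> profiles V A"
        using someI_ex[OF ex] by blast
      then show ?thesis unfolding G_def using True inX by simp
    next
      case False
      have "(SOME x. x\<in>X) \<in> X" using Xne by (simp add: some_in_eq)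
      then show ?thesis unfolding G_def using False by simp
    qed
  next
    fix P assume P: "P\<in>profiles V A"
    have ex: "\<exists>P0. P0\<in>profiles V A \<and> restrict_profile P0 X = restrict_profile P X" using P by blast
    define P0 where "P0 = (SOME P0. P0\<in>profiles V A \<and> restrict_profile P0 X = restrict_profile P X)"
    have P0: "P0\<in>profiles V A" "restrict_profile P0 X = restrict_profile P X"
      using someI_ex[OF ex] unfolding P0_def by blast+
    have agr: "\<forall>i. P0 i \<inter> X \<times> X = P i \<inter> X \<times> X"
      using P0(2) unfolding restrict_profile_def by (metis)
    have "G (restrict_profile P X) = the_elem (F P0 \<inter> X)"
      unfolding G_def P0_def using P by auto
    also have "\<dots> = the_elem (F P \<inter> X)"
      using indep[OF finV finA cons spo spp disj cross P0(1) P agr] .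
    finally show "G (restrict_profile P X) = the_elem (F P \<inter> X)" .
  qed
qed




theorem fact39:
  fixes V :: "'v set" and A :: "'a set" and F :: "('v \<Rightarrow> 'a rel) \<Rightarrow> 'a set"
  assumes "finite V" and "V \<noteq> {}" and "finite A"
    and "consular_rule V A F"
    and "irreducible V A F" and "weakly_viable V A F"
    and "SPP V A F" and "SPO V A F"
  shows "\<forall>a\<in>A. \<exists>b c. a \<noteq> b \<and> b \<noteq> c \<and> a \<noteq> c \<and>
           {a, b} \<in> range_edges V A F \<and> {b, c} \<in> range_edges V A F \<and> {a, c} \<in> range_edges V A F"
proof (intro ballI)
  note finV = assms(1) and finA = assms(3) and cons = assms(4) and irr = assms(5)
    and wv = assms(6) and spp = assms(7) and spo = assms(8)
  fix a assume aA: "a\<in>A"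
  define E where "E = F ` profiles V A"
  have Eeq: "range_edges V A F = E" unfolding range_edges_def E_def ..
  show "\<exists>b c. a \<noteq> b \<and> b \<noteq> c \<and> a \<noteq> c \<and>
           {a, b} \<in> range_edges V A F \<and> {b, c} \<in> range_edges V A F \<and> {a, c} \<in> range_edges V A F"
  proof (rule ccontr)
    assume nt0: "\<not> ?thesis"
    have nt: "\<not> (a \<noteq> b \<and> b \<noteq> c \<and> a \<noteq> c \<and> {a, b} \<in> E \<and> {b, c} \<in> E \<and> {a, c} \<in> E)" for b c
      using nt0 unfolding Eeq by blast
    have ES: "E \<subseteq> S2 A" unfolding E_def using cons_S2[OF cons] by blast
    have gdE: "good A E" unfolding good_def
    proof (intro allI impI)
      fix R assume lin: "linear_order_on A R"
      define U where "U = (\<lambda>i. if i\<in>V then R else ({}::'a rel))"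
      have Up: "U \<in> profiles V A" unfolding profiles_def U_def using lin by auto
      have "\<forall>W\<in>E. (best R (F U), best R W)\<in>R \<and> (worst R (F U), worst R W)\<in>R"
        unfolding E_def U_def using unanimity[OF finV cons spo spp lin] by blast
      moreover have "F U \<in> E" unfolding E_def using Up by blast
      ultimately show "\<exists>W0\<in>E. \<forall>W\<in>E. (best R W0, best R W)\<in>R \<and> (worst R W0, worst R W)\<in>R"
        by blast
    qed
    define Y where "Y = {y\<in>A. {a,y}\<in>E}"
    define X where "X = A - Y"
    have disj: "X \<inter> Y = {}" unfolding X_def by blast
    have XY: "X \<union> Y = A" unfolding X_def Y_def by blast
    have aX: "a\<in>X"
    proof -
      have "{a,a} \<notin> S2 A" unfolding S2_def by simp
      then have "{a,a} \<notin> E" using ES by blast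
      then show ?thesis unfolding X_def Y_def using aA by blast
    qed
    obtain P0 where P0: "P0 \<in> profiles V A" "a \<in> F P0" using wv aA unfolding weakly_viable_def by blast
    have FP0: "F P0 \<in> S2 A" using cons_S2[OF cons P0(1)] .
    obtain p q where pq: "F P0 = {p,q}" "p\<noteq>q" using FP0 unfolding S2_def by (auto simp: card_2_iff)
    obtain z where az: "{a,z} \<in> E"
    proof (cases "a = p")
      case True then show ?thesis using that[of q] pq P0 unfolding E_def by (metis image_eqI)
    next
      case False then have "a = q" using pq P0 by blast
      then show ?thesis using that[of p] pq P0 unfolding E_def by (metis image_eqI insert_commute)
    qed
    have zA: "z\<in>A" using S2_elems[of a z A] ES az by blast
    have zY: "z\<in>Y" unfolding Y_def using zA az by blast
    have cross: "\<forall>W\<in>E. \<exists>x\<in>X. \<exists>y\<in>Y. W = {x,y}"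
    proof
      fix W assume W: "W\<in>E"
      obtain p q where pq: "W = {p,q}" "p\<noteq>q" using W ES unfolding S2_def by (auto simp: card_2_iff)
      have pqE: "{p,q}\<in>E" using W pq by simp
      have pA: "p\<in>A" "q\<in>A" using S2_elems[of p q A] ES pqE by auto
      have c1: "\<not> (p\<in>Y \<and> q\<in>Y)"
      proof
        assume h: "p\<in>Y \<and> q\<in>Y"
        have "a \<noteq> p" "a \<noteq> q" using h aX disj by blast+
        moreover have "{a,p}\<in>E" "{a,q}\<in>E" using h unfolding Y_def by blast+
        ultimately show False using nt[of p q] pq(2) pqE by blast
      qed
      have c2: "\<not> (p\<in>X \<and> q\<in>X)"
      proof
        assume h: "p\<in>X \<and> q\<in>X"
        have nap: "{a,p}\<notin>E" "{a,q}\<notin>E" using h unfolding X_def Y_def using pA by blast+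
        have "a \<noteq> p"
        proof
          assume "a = p" then have "{a,q}\<in>E" using pqE by simp
          then show False using nap by blast
        qed
        moreover have "a \<noteq> q"
        proof
          assume "a = q" then have "{a,p}\<in>E" using pqE by (simp add: insert_commute)
          then show False using nap by blast
        qed
        ultimately show False using no_pattern[OF finA ES gdE pqE az _ _ nap] by blast
      qed
      have "p\<in>X \<or> p\<in>Y" "q\<in>X \<or> q\<in>Y" using pA XY by blast+
      then show "\<exists>x\<in>X. \<exists>y\<in>Y. W = {x,y}" using c1 c2 pq(1) by (metis insert_commute)
    qed
    have crossY: "\<forall>W\<in>E. \<exists>y\<in>Y. \<exists>x\<in>X. W = {y,x}" using cross by (metis insert_commute)
    have disj': "Y \<inter> X = {}" using disj by blast
    obtain G where G: "\<forall>Q\<in>profiles V X. G Q \<in> X"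
        "\<forall>P\<in>profiles V A. G (restrict_profile P X) = the_elem (F P \<inter> X)"
      using side[OF finV finA cons spo spp disj cross[unfolded E_def]] aX by blast
    obtain H where H: "\<forall>Q\<in>profiles V Y. H Q \<in> Y"
        "\<forall>P\<in>profiles V A. H (restrict_profile P Y) = the_elem (F P \<inter> Y)"
      using side[OF finV finA cons spo spp disj' crossY[unfolded E_def]] zY by blast
    have "reducible V A F" unfolding reducible_def
    proof (intro exI conjI)
      show "X \<union> Y = A" by (fact XY)
      show "X \<inter> Y = {}" by (fact disj)
      show "\<forall>Q\<in>profiles V X. G Q \<in> X" by (fact G(1))
      show "\<forall>Q\<in>profiles V Y. H Q \<in> Y" by (fact H(1))
      show "\<forall>P\<in>profiles V A. F P = {G (restrict_profile P X), H (restrict_profile P Y)}"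
      proof
        fix P assume P: "P\<in>profiles V A"
        obtain x y where xy: "x\<in>X" "y\<in>Y" "F P = {x,y}" using cross P unfolding E_def by blast
        have "G (restrict_profile P X) = x" using G(2) P xy the_elem_cross[OF xy(1,2) disj] by simp
        moreover have "H (restrict_profile P Y) = y"
          using H(2) P xy the_elem_cross[OF xy(2,1) disj'] by (simp add: insert_commute)
        ultimately show "F P = {G (restrict_profile P X), H (restrict_profile P Y)}" using xy by simp
      qed
    qed
    then show False using irr unfolding irreducible_def by blast
  qed
qed


end
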